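(* Let $\xi,\zeta$ be admissible families and suppose that for each predictable stopping time $\tau\in\mathcal T$ with $\tau>0$ a.s., $\{\xi(\tau)=\zeta(\tau)\}=\emptyset$ a.s. Then for each $\theta\in\mathcal T$ and each non-decreasing sequence of stopping times $(\theta_n)_{n\in\mathbb N}\subset\mathcal T$ with $\theta_n\uparrow\theta$, $$\{\xi(\theta)=\zeta(\theta)\}\cap\{\theta_n<\theta\text{ for all }n\}=\emptyset\quad\text{a.s.}$$
   Context: Filtered probability space $(\Omega,\mathcal F,(\mathcal F_t)_{0\le t\le T},P)$ satisfying the usual conditions, $\mathcal F=\mathcal F_T$, $\mathcal F_0$ trivial, $T\in(0,\infty)$. $\mathcal T$: stopping times valued in $[0,T]$. A family $\phi=(\phi(\theta),\theta\in\mathcal T)$ of $\overline{\mathbb R}$-valued random variables is admissible if each $\phi(\theta)$ is $\mathcal F_\theta$-measurable and $\phi(\theta)=\phi(\theta')$ a.s. on $\{\theta=\theta'\}$. "$E=\emptyset$ a.s." means $P(E)=0$. *)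

theory Defs
  imports "HOL-Probability.Probability"
begin

definition usual_filtered_prob_space ::
  "'a measure \<Rightarrow> (real \<Rightarrow> 'a set set) \<Rightarrow> real \<Rightarrow> bool" where
  "usual_filtered_prob_space M F T \<longleftrightarrow>
     prob_space M \<and> 0 < T \<and>
     (\<forall>t\<in>{0..T}. sigma_algebra (space M) (F t) \<and> F t \<subseteq> sets M) \<and>
     (\<forall>s\<in>{0..T}. \<forall>t\<in>{0..T}. s \<le> t \<longrightarrow> F s \<subseteq> F t) \<and>
     F T = sets M \<and>
     \<comment> \<open>completeness of the space and of F 0 (usual conditions)\<close>
     (\<forall>A\<in>null_sets M. \<forall>B. B \<subseteq> A \<longrightarrow> B \<in> sets M) \<and>
     null_sets M \<subseteq> F 0 \<and>
     \<comment> \<open>right-continuity (usual conditions)\<close>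
     (\<forall>t\<in>{0..<T}. F t = (\<Inter>s\<in>{t<..T}. F s)) \<and>
     \<comment> \<open>F 0 is trivial\<close>
     (\<forall>A\<in>F 0. emeasure M A = 0 \<or> emeasure M A = 1)"

definition stopping_timeT ::
  "'a measure \<Rightarrow> (real \<Rightarrow> 'a set set) \<Rightarrow> real \<Rightarrow> ('a \<Rightarrow> real) \<Rightarrow> bool" where
  "stopping_timeT M F T \<theta> \<longleftrightarrow>
     (\<forall>\<omega>\<in>space M. 0 \<le> \<theta> \<omega> \<and> \<theta> \<omega> \<le> T) \<and>
     (\<forall>t\<in>{0..T}. {\<omega>\<in>space M. \<theta> \<omega> \<le> t} \<in> F t)"

definition F_at ::
  "'a measure \<Rightarrow> (real \<Rightarrow> 'a set set) \<Rightarrow> real \<Rightarrow> ('a \<Rightarrow> real) \<Rightarrow> 'a set set" where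
  "F_at M F T \<theta> = {A\<in>sets M. \<forall>t\<in>{0..T}. A \<inter> {\<omega>\<in>space M. \<theta> \<omega> \<le> t} \<in> F t}"

definition admissible ::
  "'a measure \<Rightarrow> (real \<Rightarrow> 'a set set) \<Rightarrow> real \<Rightarrow> (('a \<Rightarrow> real) \<Rightarrow> 'a \<Rightarrow> ereal) \<Rightarrow> bool" where
  "admissible M F T \<phi> \<longleftrightarrow>
     (\<forall>\<theta>. stopping_timeT M F T \<theta> \<longrightarrow>
        (\<forall>B\<in>sets (borel :: ereal measure). \<phi> \<theta> -` B \<inter> space M \<in> F_at M F T \<theta>)) \<and>
     (\<forall>\<theta> \<theta>'. stopping_timeT M F T \<theta> \<longrightarrow> stopping_timeT M F T \<theta>' \<longrightarrow>
        (AE \<omega> in M. \<theta> \<omega> = \<theta>' \<omega> \<longrightarrow> \<phi> \<theta> \<omega> = \<phi> \<theta>' \<omega>))"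

definition predictable_sets ::
  "'a measure \<Rightarrow> (real \<Rightarrow> 'a set set) \<Rightarrow> real \<Rightarrow> (real \<times> 'a) set set" where
  "predictable_sets M F T =
     sigma_sets ({0..T} \<times> space M)
       ({{0} \<times> A | A. A \<in> F 0} \<union>
        {{s<..t} \<times> A | s t A. 0 \<le> s \<and> s < t \<and> t \<le> T \<and> A \<in> F s})"

definition predictable_stopping_time ::
  "'a measure \<Rightarrow> (real \<Rightarrow> 'a set set) \<Rightarrow> real \<Rightarrow> ('a \<Rightarrow> real) \<Rightarrow> bool" where
  "predictable_stopping_time M F T \<tau> \<longleftrightarrow>
     stopping_timeT M F T \<tau> \<and>
     {(t, \<omega>). \<omega> \<in> space M \<and> \<tau> \<omega> \<le> t \<and> t \<le> T} \<in> predictable_sets M F T"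

end

theory Submission
  imports Defs
begin

lemma sa_INT: "sigma_algebra \<Omega> A \<Longrightarrow> (\<And>n::nat. f n \<in> A) \<Longrightarrow> (\<Inter>n. f n) \<in> A"
  using sigma_algebra.countable_INT[of \<Omega> A f UNIV] by auto

lemma sa_UN: "sigma_algebra \<Omega> A \<Longrightarrow> (\<And>n::nat. f n \<in> A) \<Longrightarrow> (\<Union>n. f n) \<in> A"
  using sigma_algebra.countable_nat_UN[of \<Omega> A f] by auto

context
  fixes M :: "'a measure" and F :: "real \<Rightarrow> 'a set set" and T :: real
  assumes sp: "usual_filtered_prob_space M F T"
begin

lemma Fsa: "0 \<le> t \<Longrightarrow> t \<le> T \<Longrightarrow> sigma_algebra (space M) (F t)"
  using sp unfolding usual_filtered_prob_space_def by auto

lemma Fmono: "0 \<le> s \<Longrightarrow> s \<le> t \<Longrightarrow> t \<le> T \<Longrightarrow> F s \<subseteq> F t"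
  using sp unfolding usual_filtered_prob_space_def by auto

lemma FT: "F T = sets M" and Tpos: "0 < T"
  using sp unfolding usual_filtered_prob_space_def by auto

lemma Fsub: "0 \<le> t \<Longrightarrow> t \<le> T \<Longrightarrow> F t \<subseteq> sets M"
  using sp unfolding usual_filtered_prob_space_def by auto

lemma st_less_c:
  assumes st: "stopping_timeT M F T \<theta>" and c: "0 \<le> c" and q: "0 \<le> q" "q \<le> T"
  shows "{\<omega>\<in>space M. \<theta> \<omega> + c < q} \<in> F q"
proof -
  interpret sigma_algebra "space M" "F q" using Fsa q by auto
  have eq: "{\<omega>\<in>space M. \<theta> \<omega> + c < q} = (\<Union>j. {\<omega>\<in>space M. \<theta> \<omega> \<le> q - c - 1/Suc j})"
  proof (rule set_eqI, rule iffI)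
    fix \<omega> assume "\<omega> \<in> {\<omega>\<in>space M. \<theta> \<omega> + c < q}"
    then have w: "\<omega> \<in> space M" "0 < q - c - \<theta> \<omega>" by auto
    then obtain j where "inverse (real (Suc j)) < q - c - \<theta> \<omega>" using reals_Archimedean by blast
    then show "\<omega> \<in> (\<Union>j. {\<omega>\<in>space M. \<theta> \<omega> \<le> q - c - 1/Suc j})" using w
      by (auto simp: field_simps intro!: exI[of _ j])
  next
    fix \<omega> assume "\<omega> \<in> (\<Union>j. {\<omega>\<in>space M. \<theta> \<omega> \<le> q - c - 1/Suc j})"
    then obtain j where "\<omega> \<in> space M" "\<theta> \<omega> \<le> q - c - 1/Suc j" by auto
    moreover have "0 < 1/real (Suc j)" by auto
    ultimately have "\<theta> \<omega> + c < q" by linarith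
    then show "\<omega> \<in> {\<omega>\<in>space M. \<theta> \<omega> + c < q}" using \<open>\<omega> \<in> space M\<close> by auto
  qed
  have "{\<omega>\<in>space M. \<theta> \<omega> \<le> q - c - 1/Suc j} \<in> F q" for j
  proof (cases "q - c - 1/Suc j < 0")
    case True
    then have "{\<omega>\<in>space M. \<theta> \<omega> \<le> q - c - 1/Suc j} = {}"
      using st unfolding stopping_timeT_def by force
    then show ?thesis using empty_sets by metis
  next
    case False
    have "0 < 1/real (Suc j)" by auto
    then have "q - c - 1/Suc j \<le> q" using c by linarith
    then have "F (q - c - 1/Suc j) \<subseteq> F q" using False q by (intro Fmono) auto
    moreover have "{\<omega>\<in>space M. \<theta> \<omega> \<le> q - c - 1/Suc j} \<in> F (q - c - 1/Suc j)"
      using st False q \<open>q - c - 1/Suc j \<le> q\<close> unfolding stopping_timeT_def by auto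
    ultimately show ?thesis by auto
  qed
  then show ?thesis unfolding eq by auto
qed

lemma B_le:
  fixes \<theta>s :: "nat \<Rightarrow> 'a \<Rightarrow> real"
  assumes st: "stopping_timeT M F T \<theta>" and sts: "\<And>n. stopping_timeT M F T (\<theta>s n)"
    and s: "0 \<le> s" "s \<le> T"
  shows "{\<omega>\<in>space M. (\<forall>n. \<theta>s n \<omega> < \<theta> \<omega>) \<and> \<theta> \<omega> \<le> s} \<in> F s"
proof -
  interpret sigma_algebra "space M" "F s" using Fsa s by auto
  define r where "r = (\<lambda>i. of_rat (nat_to_rat_surj i) :: real)"
  have rq: "\<exists>i. x = r i" if "x \<in> \<rat>" for x
    using that unfolding r_def Rats_eq_range_of_rat_o_nat_to_rat_surj by auto
  define X where "X n i = (if 0 \<le> r i \<and> r i \<le> s then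
     {\<omega>\<in>space M. \<theta>s n \<omega> < r i} \<inter> ({\<omega>\<in>space M. \<theta> \<omega> \<le> s} - {\<omega>\<in>space M. \<theta> \<omega> < r i}) else {})" for n i
  have Xin: "X n i \<in> F s" for n i
  proof (cases "0 \<le> r i \<and> r i \<le> s")
    case True
    have 1: "{\<omega>\<in>space M. \<theta>s n \<omega> < r i} \<in> F s"
      using st_less_c[OF sts[of n], of 0 "r i"] Fmono[of "r i" s] True s by auto
    have 2: "{\<omega>\<in>space M. \<theta> \<omega> < r i} \<in> F s"
      using st_less_c[OF st, of 0 "r i"] Fmono[of "r i" s] True s by auto
    have 3: "{\<omega>\<in>space M. \<theta> \<omega> \<le> s} \<in> F s" using st s unfolding stopping_timeT_def by auto
    show ?thesis using True 1 2 3 unfolding X_def by auto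
  qed (auto simp: X_def)
  have eq: "{\<omega>\<in>space M. (\<forall>n. \<theta>s n \<omega> < \<theta> \<omega>) \<and> \<theta> \<omega> \<le> s} = (\<Inter>n. \<Union>i. X n i)"
  proof (rule set_eqI, rule iffI)
    fix \<omega> assume a: "\<omega> \<in> {\<omega>\<in>space M. (\<forall>n. \<theta>s n \<omega> < \<theta> \<omega>) \<and> \<theta> \<omega> \<le> s}"
    show "\<omega> \<in> (\<Inter>n. \<Union>i. X n i)"
    proof
      fix n
      obtain x where x: "x \<in> \<rat>" "\<theta>s n \<omega> < x" "x < \<theta> \<omega>"
        using a Rats_dense_in_real by blast
      obtain i where i: "x = r i" using rq x by blast
      have "0 \<le> \<theta>s n \<omega>" using sts[of n] a unfolding stopping_timeT_def by auto
      then show "\<omega> \<in> (\<Union>i. X n i)" using x i a unfolding X_def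
        by (intro UN_I[of i]) auto
    qed
  next
    fix \<omega> assume "\<omega> \<in> (\<Inter>n. \<Union>i. X n i)"
    then show "\<omega> \<in> {\<omega>\<in>space M. (\<forall>n. \<theta>s n \<omega> < \<theta> \<omega>) \<and> \<theta> \<omega> \<le> s}"
      unfolding X_def by (auto split: if_splits) (meson less_le_trans not_less)
  qed
  have sa: "sigma_algebra (space M) (F s)" using Fsa s by auto
  show ?thesis unfolding eq
    apply (rule sa_INT[OF sa]) apply (rule sa_UN[OF sa]) by (rule Xin)
qed

lemma pred_sa: "sigma_algebra ({0..T} \<times> space M) (predictable_sets M F T)"
  unfolding predictable_sets_def
proof (rule sigma_algebra_sigma_sets)
  have "F t \<subseteq> Pow (space M)" if "0 \<le> t" "t \<le> T" for t
    using Fsub[OF that] sets.sets_into_space by blast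
  then show "{{0} \<times> A |A. A \<in> F 0} \<union>
    {{s<..t} \<times> A |s t A. 0 \<le> s \<and> s < t \<and> t \<le> T \<and> A \<in> F s} \<subseteq> Pow ({0..T} \<times> space M)"
    using Tpos by fastforce
qed

lemma L1:
  assumes H: "\<And>q. 0 \<le> q \<Longrightarrow> q \<le> T \<Longrightarrow> {\<omega>\<in>space M. \<sigma> \<omega> < q} \<in> F q"
  shows "{(t,\<omega>). \<omega>\<in>space M \<and> \<sigma> \<omega> < t \<and> 0 \<le> t \<and> t \<le> T} \<in> predictable_sets M F T"
proof -
  define r where "r = (\<lambda>i. of_rat (nat_to_rat_surj i) :: real)"
  have rq: "\<exists>i. x = r i" if "x \<in> \<rat>" for x
    using that unfolding r_def Rats_eq_range_of_rat_o_nat_to_rat_surj by auto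
  define Y where "Y i = (if 0 \<le> r i \<and> r i < T then {r i<..T} \<times> {\<omega>\<in>space M. \<sigma> \<omega> < r i} else {})" for i
  have sa: "sigma_algebra ({0..T} \<times> space M) (predictable_sets M F T)" by (rule pred_sa)
  interpret P: sigma_algebra "{0..T} \<times> space M" "predictable_sets M F T" by (rule sa)
  have Y: "Y i \<in> predictable_sets M F T" for i
  proof (cases "0 \<le> r i \<and> r i < T")
    case True
    have "Y i = {r i<..T} \<times> {\<omega>\<in>space M. \<sigma> \<omega> < r i}" using True unfolding Y_def by simp
    also have "\<dots> \<in> predictable_sets M F T" unfolding predictable_sets_def
      apply (rule sigma_sets.Basic, rule UnI2, rule CollectI)
      apply (rule exI[of _ "r i"], rule exI[of _ T], rule exI[of _ "{\<omega>\<in>space M. \<sigma> \<omega> < r i}"])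
      using True H[of "r i"] by auto
    finally show ?thesis .
  next
    case False
    then have "Y i = {}" unfolding Y_def by (rule if_not_P)
    then show ?thesis using P.empty_sets by simp
  qed
  have Z: "{0} \<times> {\<omega>\<in>space M. \<sigma> \<omega> < 0} \<in> predictable_sets M F T"
    unfolding predictable_sets_def
    apply (rule sigma_sets.Basic, rule UnI1, rule CollectI)
    apply (rule exI[of _ "{\<omega>\<in>space M. \<sigma> \<omega> < 0}"])
    using H[of 0] Tpos by auto
  have eq: "{(t,\<omega>). \<omega>\<in>space M \<and> \<sigma> \<omega> < t \<and> 0 \<le> t \<and> t \<le> T} =
     ({0} \<times> {\<omega>\<in>space M. \<sigma> \<omega> < 0}) \<union> (\<Union>i. Y i)"
  proof (rule set_eqI, rule iffI)
    fix x assume "x \<in> {(t,\<omega>). \<omega>\<in>space M \<and> \<sigma> \<omega> < t \<and> 0 \<le> t \<and> t \<le> T}"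
    then obtain t \<omega> where x: "x = (t,\<omega>)" "\<omega>\<in>space M" "\<sigma> \<omega> < t" "0 \<le> t" "t \<le> T" by auto
    show "x \<in> ({0} \<times> {\<omega>\<in>space M. \<sigma> \<omega> < 0}) \<union> (\<Union>i. Y i)"
    proof (cases "t = 0")
      case True then show ?thesis using x by auto
    next
      case False
      then have "max (\<sigma> \<omega>) 0 < t" using x by auto
      then obtain y where y: "y \<in> \<rat>" "max (\<sigma> \<omega>) 0 < y" "y < t"
        using Rats_dense_in_real by blast
      obtain i where i: "y = r i" using rq y by blast
      have "x \<in> Y i" using x y i unfolding Y_def by auto
      then show ?thesis by blast
    qed
  next
    fix x assume "x \<in> ({0} \<times> {\<omega>\<in>space M. \<sigma> \<omega> < 0}) \<union> (\<Union>i. Y i)"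
    then show "x \<in> {(t,\<omega>). \<omega>\<in>space M \<and> \<sigma> \<omega> < t \<and> 0 \<le> t \<and> t \<le> T}"
      unfolding Y_def using Tpos by (auto split: if_splits)
  qed
  show ?thesis unfolding eq
    by (intro P.Un Z sa_UN[OF sa] Y)
qed

lemma st_meas:
  assumes st: "stopping_timeT M F T \<theta>"
  shows "\<theta> \<in> borel_measurable M"
  unfolding borel_measurable_iff_le
proof
  fix a
  show "{w \<in> space M. \<theta> w \<le> a} \<in> sets M"
  proof (cases "a < 0")
    case True
    then have "{w \<in> space M. \<theta> w \<le> a} = {}" using st unfolding stopping_timeT_def by force
    then show ?thesis by (metis sets.empty_sets)
  next
    case False
    show ?thesis
    proof (cases "a \<le> T")
      case True
      have "{w \<in> space M. \<theta> w \<le> a} \<in> F a" using st False True unfolding stopping_timeT_def by simp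
      moreover have "F a \<subseteq> sets M" using Fsub[of a] False True by simp
      ultimately show ?thesis by blast
    next
      case False
      then have "{w \<in> space M. \<theta> w \<le> a} = space M" using st unfolding stopping_timeT_def by force
      then show ?thesis by simp
    qed
  qed
qed

lemma lim_below: "(\<forall>m::nat. c - 1/Suc m < (t::real)) \<longleftrightarrow> c \<le> t"
proof
  assume a: "\<forall>m::nat. c - 1/Suc m < t"
  show "c \<le> t"
  proof (rule ccontr)
    assume "\<not> c \<le> t"
    then obtain m where "inverse (real (Suc m)) < c - t" using reals_Archimedean[of "c - t"] by auto
    then have "1 / real (Suc m) < c - t" by (simp add: inverse_eq_divide)
    then show False using a[rule_format, of m] by linarith
  qed
next
  assume "c \<le> t"
  show "\<forall>m::nat. c - 1/Suc m < t"
  proof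
    fix m :: nat
    have "0 < 1 / real (Suc m)" by auto
    then show "c - 1/Suc m < t" using \<open>c \<le> t\<close> by linarith
  qed
qed

lemma less_from_le:
  assumes H: "\<And>s. 0 \<le> s \<Longrightarrow> s \<le> T \<Longrightarrow> {\<omega>\<in>space M. P \<omega> \<and> f \<omega> \<le> s} \<in> F s"
    and f0: "\<And>\<omega>. \<omega> \<in> space M \<Longrightarrow> 0 \<le> f \<omega>" and q: "0 \<le> q" "q \<le> T"
  shows "{\<omega>\<in>space M. P \<omega> \<and> f \<omega> < q} \<in> F q"
proof -
  have sa: "sigma_algebra (space M) (F q)" using Fsa q by auto
  interpret sigma_algebra "space M" "F q" by (rule sa)
  have eq: "{\<omega>\<in>space M. P \<omega> \<and> f \<omega> < q} = (\<Union>j. {\<omega>\<in>space M. P \<omega> \<and> f \<omega> \<le> q - 1/Suc j})"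
  proof (rule set_eqI, rule iffI)
    fix \<omega> assume "\<omega> \<in> {\<omega>\<in>space M. P \<omega> \<and> f \<omega> < q}"
    then have w: "\<omega> \<in> space M" "P \<omega>" "0 < q - f \<omega>" by auto
    then obtain j where "inverse (real (Suc j)) < q - f \<omega>" using reals_Archimedean by blast
    then have "f \<omega> \<le> q - 1/Suc j" by (simp add: inverse_eq_divide)
    then show "\<omega> \<in> (\<Union>j. {\<omega>\<in>space M. P \<omega> \<and> f \<omega> \<le> q - 1/Suc j})" using w by auto
  next
    fix \<omega> assume "\<omega> \<in> (\<Union>j. {\<omega>\<in>space M. P \<omega> \<and> f \<omega> \<le> q - 1/Suc j})"
    then obtain j where w: "\<omega> \<in> space M" "P \<omega>" "f \<omega> \<le> q - 1/Suc j" by auto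
    moreover have "0 < 1/real (Suc j)" by auto
    ultimately have "f \<omega> < q" by linarith
    then show "\<omega> \<in> {\<omega>\<in>space M. P \<omega> \<and> f \<omega> < q}" using w by auto
  qed
  have "{\<omega>\<in>space M. P \<omega> \<and> f \<omega> \<le> q - 1/Suc j} \<in> F q" for j
  proof (cases "q - 1/Suc j < 0")
    case True
    then have "{\<omega>\<in>space M. P \<omega> \<and> f \<omega> \<le> q - 1/Suc j} = {}" using f0 by force
    then show ?thesis using empty_sets by metis
  next
    case False
    have "0 < 1/real (Suc j)" by auto
    then have "q - 1/Suc j \<le> q" by linarith
    then have "F (q - 1/Suc j) \<subseteq> F q" using False q by (intro Fmono) auto
    moreover have "{\<omega>\<in>space M. P \<omega> \<and> f \<omega> \<le> q - 1/Suc j} \<in> F (q - 1/Suc j)"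
      apply (rule H) using False q \<open>q - 1/Suc j \<le> q\<close> by linarith+
    ultimately show ?thesis by auto
  qed
  then show ?thesis unfolding eq by (intro sa_UN[OF sa])
qed

lemma const_in_F: "0 \<le> q \<Longrightarrow> q \<le> T \<Longrightarrow> {\<omega>\<in>space M. P} \<in> F q"
proof -
  assume q: "0 \<le> q" "q \<le> T"
  interpret sigma_algebra "space M" "F q" using Fsa q by auto
  show ?thesis by (cases P) auto
qed

lemma main:
  fixes \<theta>s :: "nat \<Rightarrow> 'a \<Rightarrow> real" and \<xi> \<zeta> :: "('a \<Rightarrow> real) \<Rightarrow> 'a \<Rightarrow> ereal"
  assumes adm_xi: "admissible M F T \<xi>"
    and adm_zeta: "admissible M F T \<zeta>"
    and pred: "\<And>\<tau>. predictable_stopping_time M F T \<tau> \<Longrightarrow> (AE \<omega> in M. 0 < \<tau> \<omega>) \<Longrightarrow>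
                 {\<omega>\<in>space M. \<xi> \<tau> \<omega> = \<zeta> \<tau> \<omega>} \<in> null_sets M"
    and st: "stopping_timeT M F T \<theta>" and sts: "\<And>n. stopping_timeT M F T (\<theta>s n)"
    and mono: "\<And>n. \<forall>\<omega>\<in>space M. \<theta>s n \<omega> \<le> \<theta>s (Suc n) \<omega>"
    and lim: "\<forall>\<omega>\<in>space M. (\<lambda>n. \<theta>s n \<omega>) \<longlonglongrightarrow> \<theta> \<omega>"
  shows "{\<omega>\<in>space M. \<xi> \<theta> \<omega> = \<zeta> \<theta> \<omega> \<and> (\<forall>n. \<theta>s n \<omega> < \<theta> \<omega>)} \<in> null_sets M"
proof -
  define B where "B = {\<omega>\<in>space M. \<forall>n. \<theta>s n \<omega> < \<theta> \<omega>}"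
  define \<tau> where "\<tau> = (\<lambda>\<omega>. if \<omega> \<in> B then \<theta> \<omega> else min (\<theta> \<omega> + 1) T)"
  have \<theta>b: "0 \<le> \<theta> \<omega>" "\<theta> \<omega> \<le> T" if "\<omega> \<in> space M" for \<omega>
    using st that unfolding stopping_timeT_def by auto
  have \<theta>sb: "0 \<le> \<theta>s n \<omega>" if "\<omega> \<in> space M" for \<omega> n
    using sts[of n] that unfolding stopping_timeT_def by auto
  have le_lim: "\<theta>s n \<omega> \<le> \<theta> \<omega>" if "\<omega> \<in> space M" for \<omega> n
  proof -
    have "incseq (\<lambda>n. \<theta>s n \<omega>)" using mono that by (intro incseq_SucI) auto
    then show ?thesis using lim that by (intro incseq_le) auto
  qed
  have fib1: "(\<forall>n. \<theta>s n \<omega> < t) \<longleftrightarrow> \<theta> \<omega> \<le> t" if "\<omega> \<in> B" for \<omega> t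
  proof
    assume a: "\<forall>n. \<theta>s n \<omega> < t"
    have "(\<lambda>n. \<theta>s n \<omega>) \<longlonglongrightarrow> \<theta> \<omega>" using lim that unfolding B_def by auto
    then show "\<theta> \<omega> \<le> t" using a by (intro LIMSEQ_le_const2) (auto intro: less_imp_le)
  next
    assume "\<theta> \<omega> \<le> t"
    then show "\<forall>n. \<theta>s n \<omega> < t" using that unfolding B_def by (auto intro: less_le_trans)
  qed
  have fib2: "(\<forall>n. \<theta>s n \<omega> < t) \<longleftrightarrow> \<theta> \<omega> < t" if "\<omega> \<in> space M" "\<omega> \<notin> B" for \<omega> t
  proof
    have "\<not> (\<forall>n. \<theta>s n \<omega> < \<theta> \<omega>)" using that unfolding B_def by auto
    then obtain n where "\<theta> \<omega> \<le> \<theta>s n \<omega>" by (meson not_less)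
    then show "\<forall>n. \<theta>s n \<omega> < t \<Longrightarrow> \<theta> \<omega> < t" by (meson le_less_trans)
  next
    show "\<theta> \<omega> < t \<Longrightarrow> \<forall>n. \<theta>s n \<omega> < t" using le_lim[OF that(1)] by (meson le_less_trans)
  qed
  have BF: "{\<omega>\<in>space M. \<omega> \<in> B \<and> \<theta> \<omega> \<le> s} \<in> F s" if "0 \<le> s" "s \<le> T" for s
  proof -
    have "{\<omega>\<in>space M. \<omega> \<in> B \<and> \<theta> \<omega> \<le> s} = {\<omega>\<in>space M. (\<forall>n. \<theta>s n \<omega> < \<theta> \<omega>) \<and> \<theta> \<omega> \<le> s}"
      unfolding B_def by auto
    then show ?thesis using B_le[OF st sts that] by simp
  qed
  have BM: "B \<in> sets M"
  proof -
    have "B = {\<omega>\<in>space M. \<omega> \<in> B \<and> \<theta> \<omega> \<le> T}" using \<theta>b unfolding B_def by auto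
    then show ?thesis using BF[of T] Tpos FT by simp
  qed
  have st_tau: "stopping_timeT M F T \<tau>"
    unfolding stopping_timeT_def
  proof (intro conjI ballI)
    fix \<omega> assume w: "\<omega> \<in> space M"
    show "0 \<le> \<tau> \<omega>" "\<tau> \<omega> \<le> T" using \<theta>b[OF w] Tpos unfolding \<tau>_def by auto
  next
    fix t assume t: "t \<in> {0..T}"
    show "{\<omega>\<in>space M. \<tau> \<omega> \<le> t} \<in> F t"
    proof (cases "t = T")
      case True
      have "{\<omega>\<in>space M. \<tau> \<omega> \<le> t} = space M" using \<theta>b True unfolding \<tau>_def by auto
      then show ?thesis using FT True by simp
    next
      case False
      interpret sigma_algebra "space M" "F t" using Fsa t by auto
      have eq: "{\<omega>\<in>space M. \<tau> \<omega> \<le> t} = {\<omega>\<in>space M. \<omega> \<in> B \<and> \<theta> \<omega> \<le> t} \<union> {\<omega>\<in>space M. \<theta> \<omega> + 1 \<le> t}"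
        using False t unfolding \<tau>_def by auto
      have "{\<omega>\<in>space M. \<theta> \<omega> + 1 \<le> t} \<in> F t"
      proof (cases "t < 1")
        case True
        then have "{\<omega>\<in>space M. \<theta> \<omega> + 1 \<le> t} = {}" using \<theta>b by force
        then show ?thesis using empty_sets by metis
      next
        case False
        then have "{\<omega>\<in>space M. \<theta> \<omega> + 1 \<le> t} = {\<omega>\<in>space M. \<theta> \<omega> \<le> t - 1}" by auto
        moreover have "{\<omega>\<in>space M. \<theta> \<omega> \<le> t - 1} \<in> F (t - 1)" using st False t unfolding stopping_timeT_def by auto
        moreover have "F (t - 1) \<subseteq> F t" using False t by (intro Fmono) auto
        ultimately show ?thesis by auto
      qed
      then show ?thesis unfolding eq using BF[of t] t by auto
    qed
  qed
  define L where "L \<sigma> = {(t,\<omega>). \<omega>\<in>space M \<and> \<sigma> \<omega> < t \<and> 0 \<le> t \<and> t \<le> T}" for \<sigma> :: "'a \<Rightarrow> real"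
  define \<sigma>B where "\<sigma>B = (\<lambda>\<omega>. if \<omega> \<in> B then \<theta> \<omega> else T + 1)"
  interpret P: sigma_algebra "{0..T} \<times> space M" "predictable_sets M F T" by (rule pred_sa)
  have LP: "L \<sigma> \<in> predictable_sets M F T" if "\<And>q. 0 \<le> q \<Longrightarrow> q \<le> T \<Longrightarrow> {\<omega>\<in>space M. \<sigma> \<omega> < q} \<in> F q" for \<sigma>
    unfolding L_def by (rule L1[OF that])
  have S: "(\<Inter>n. L (\<theta>s n)) \<in> predictable_sets M F T"
    using st_less_c[OF sts, of 0] by (intro sa_INT[OF pred_sa] LP) simp
  have C: "({0..T} \<times> space M) - L \<theta> \<in> predictable_sets M F T"
    using st_less_c[OF st, of 0] by (intro P.Diff P.top LP) simp
  have D: "L \<sigma>B \<in> predictable_sets M F T"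
  proof (rule LP)
    fix q assume q: "0 \<le> q" "q \<le> T"
    have "{\<omega>\<in>space M. \<sigma>B \<omega> < q} = {\<omega>\<in>space M. \<omega> \<in> B \<and> \<theta> \<omega> < q}"
      using q unfolding \<sigma>B_def by auto
    also have "\<dots> \<in> F q" using BF \<theta>b q by (intro less_from_le) auto
    finally show "{\<omega>\<in>space M. \<sigma>B \<omega> < q} \<in> F q" .
  qed
  have E: "(\<Inter>m. L (\<lambda>\<omega>. (\<theta> \<omega> + 1) - 1/Suc m)) \<in> predictable_sets M F T"
  proof (intro sa_INT[OF pred_sa] LP)
    fix m :: nat and q assume q: "0 \<le> q" "q \<le> T"
    have "1/real (Suc m) \<le> 1" by auto
    then have "0 \<le> 1 - 1/real (Suc m)" by linarith
    then have "{\<omega>\<in>space M. \<theta> \<omega> + (1 - 1/Suc m) < q} \<in> F q" using st_less_c[OF st _ q] by blast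
    then show "{\<omega>\<in>space M. (\<theta> \<omega> + 1) - 1/Suc m < q} \<in> F q" by (simp add: algebra_simps)
  qed
  have Ts: "(\<Inter>m. L (\<lambda>\<omega>. T - 1/Suc m)) \<in> predictable_sets M F T"
    by (intro sa_INT[OF pred_sa] LP const_in_F)
  have Eeq: "(\<Inter>m. L (\<lambda>\<omega>. (\<theta> \<omega> + 1) - 1/Suc m)) = {(t,\<omega>). \<omega>\<in>space M \<and> \<theta> \<omega> + 1 \<le> t \<and> 0 \<le> t \<and> t \<le> T}"
    unfolding L_def using lim_below by auto
  have Tseq: "(\<Inter>m. L (\<lambda>\<omega>. T - 1/Suc m)) = {(t,\<omega>). \<omega>\<in>space M \<and> T \<le> t \<and> 0 \<le> t \<and> t \<le> T}"
    unfolding L_def using lim_below by auto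
  have Seq: "(\<Inter>n. L (\<theta>s n)) = {(t,\<omega>). \<omega>\<in>space M \<and> (\<forall>n. \<theta>s n \<omega> < t) \<and> 0 \<le> t \<and> t \<le> T}"
    unfolding L_def by auto
  have key: "\<tau> \<omega> \<le> t \<longleftrightarrow> (((\<forall>n. \<theta>s n \<omega> < t) \<and> \<not> \<theta> \<omega> < t) \<or> \<sigma>B \<omega> < t \<or> \<theta> \<omega> + 1 \<le> t \<or> T \<le> t)"
    if "\<omega> \<in> space M" "0 \<le> t" "t \<le> T" for \<omega> t
  proof (cases "\<omega> \<in> B")
    case True
    then show ?thesis using fib1[OF True, of t] \<theta>b[OF that(1)] unfolding \<tau>_def \<sigma>B_def by auto
  next
    case False
    then show ?thesis using fib2[OF that(1) False, of t] that unfolding \<tau>_def \<sigma>B_def by auto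
  qed
  have Peq: "{(t, \<omega>). \<omega> \<in> space M \<and> \<tau> \<omega> \<le> t \<and> t \<le> T} =
     ((\<Inter>n. L (\<theta>s n)) \<inter> (({0..T} \<times> space M) - L \<theta>)) \<union> L \<sigma>B \<union>
     (\<Inter>m. L (\<lambda>\<omega>. (\<theta> \<omega> + 1) - 1/Suc m)) \<union> (\<Inter>m. L (\<lambda>\<omega>. T - 1/Suc m))"
    unfolding Eeq Tseq Seq
  proof (rule set_eqI)
    fix x :: "real \<times> 'a"
    obtain t \<omega> where x: "x = (t, \<omega>)" by (cases x)
    have t0: "0 \<le> t" if "\<omega> \<in> space M" "\<tau> \<omega> \<le> t"
      using st_tau that unfolding stopping_timeT_def by force
    show "x \<in> {(t, \<omega>). \<omega> \<in> space M \<and> \<tau> \<omega> \<le> t \<and> t \<le> T} \<longleftrightarrow> x \<in> 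
      {(t,\<omega>). \<omega>\<in>space M \<and> (\<forall>n. \<theta>s n \<omega> < t) \<and> 0 \<le> t \<and> t \<le> T} \<inter> (({0..T} \<times> space M) - L \<theta>) \<union> L \<sigma>B \<union>
      {(t,\<omega>). \<omega>\<in>space M \<and> \<theta> \<omega> + 1 \<le> t \<and> 0 \<le> t \<and> t \<le> T} \<union> {(t,\<omega>). \<omega>\<in>space M \<and> T \<le> t \<and> 0 \<le> t \<and> t \<le> T}"
      unfolding x L_def using key[of \<omega> t] t0 by auto
  qed
  have pst: "predictable_stopping_time M F T \<tau>"
    unfolding predictable_stopping_time_def Peq using st_tau S C D E Ts by auto
  have pos: "AE \<omega> in M. 0 < \<tau> \<omega>"
  proof (rule AE_I2)
    fix \<omega> assume w: "\<omega> \<in> space M"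
    show "0 < \<tau> \<omega>"
    proof (cases "\<omega> \<in> B")
      case True
      then have "\<theta>s 0 \<omega> < \<theta> \<omega>" unfolding B_def by auto
      then show ?thesis using True \<theta>sb[OF w, of 0] unfolding \<tau>_def by auto
    qed (use \<theta>b[OF w] Tpos in \<open>auto simp: \<tau>_def\<close>)
  qed
  have N: "{\<omega>\<in>space M. \<xi> \<tau> \<omega> = \<zeta> \<tau> \<omega>} \<in> null_sets M" by (rule pred[OF pst pos])
  have a1: "AE \<omega> in M. \<tau> \<omega> = \<theta> \<omega> \<longrightarrow> \<xi> \<tau> \<omega> = \<xi> \<theta> \<omega>"
    using adm_xi st_tau st unfolding admissible_def by blast
  have a2: "AE \<omega> in M. \<tau> \<omega> = \<theta> \<omega> \<longrightarrow> \<zeta> \<tau> \<omega> = \<zeta> \<theta> \<omega>"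
    using adm_zeta st_tau st unfolding admissible_def by blast
  have meas: "\<phi> \<theta> \<in> borel_measurable M" if "admissible M F T \<phi>" for \<phi> :: "('a \<Rightarrow> real) \<Rightarrow> 'a \<Rightarrow> ereal"
  proof (rule measurableI)
    fix A :: "ereal set" assume "A \<in> sets borel"
    then have "\<phi> \<theta> -` A \<inter> space M \<in> F_at M F T \<theta>" using that st unfolding admissible_def by blast
    then show "\<phi> \<theta> -` A \<inter> space M \<in> sets M" unfolding F_at_def by auto
  qed auto
  have Eq: "{\<omega>\<in>space M. \<xi> \<theta> \<omega> = \<zeta> \<theta> \<omega>} \<in> sets M"
    using meas[OF adm_xi] meas[OF adm_zeta] by (rule measurable_equality_set)
  have Aeq: "{\<omega>\<in>space M. \<xi> \<theta> \<omega> = \<zeta> \<theta> \<omega> \<and> (\<forall>n. \<theta>s n \<omega> < \<theta> \<omega>)} = {\<omega>\<in>space M. \<xi> \<theta> \<omega> = \<zeta> \<theta> \<omega>} \<inter> B"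
    unfolding B_def by auto
  have AM: "{\<omega>\<in>space M. \<xi> \<theta> \<omega> = \<zeta> \<theta> \<omega> \<and> (\<forall>n. \<theta>s n \<omega> < \<theta> \<omega>)} \<in> sets M"
    unfolding Aeq using Eq BM by auto
  have "AE \<omega> in M. \<omega> \<notin> {\<omega>\<in>space M. \<xi> \<theta> \<omega> = \<zeta> \<theta> \<omega> \<and> (\<forall>n. \<theta>s n \<omega> < \<theta> \<omega>)}"
    using AE_not_in[OF N] a1 a2
  proof eventually_elim
    case (elim \<omega>)
    show ?case
    proof
      assume "\<omega> \<in> {\<omega>\<in>space M. \<xi> \<theta> \<omega> = \<zeta> \<theta> \<omega> \<and> (\<forall>n. \<theta>s n \<omega> < \<theta> \<omega>)}"
      then have w: "\<omega> \<in> space M" "\<xi> \<theta> \<omega> = \<zeta> \<theta> \<omega>" "\<omega> \<in> B" unfolding B_def by auto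
      then have "\<tau> \<omega> = \<theta> \<omega>" unfolding \<tau>_def by auto
      then have "\<xi> \<tau> \<omega> = \<zeta> \<tau> \<omega>" using elim w by auto
      then show False using elim w by auto
    qed
  qed
  then show ?thesis using AM AE_iff_null_sets by blast
qed

end

theorem lemma4p7:
  fixes M :: "'a measure" and F :: "real \<Rightarrow> 'a set set" and T :: real
    and \<xi> \<zeta> :: "('a \<Rightarrow> real) \<Rightarrow> 'a \<Rightarrow> ereal"
  assumes space: "usual_filtered_prob_space M F T"
    and adm_xi: "admissible M F T \<xi>"
    and adm_zeta: "admissible M F T \<zeta>"
    and pred: "\<And>\<tau>. predictable_stopping_time M F T \<tau> \<Longrightarrow> (AE \<omega> in M. 0 < \<tau> \<omega>) \<Longrightarrow>
                 {\<omega>\<in>space M. \<xi> \<tau> \<omega> = \<zeta> \<tau> \<omega>} \<in> null_sets M"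
  shows "\<forall>\<theta> (\<theta>s :: nat \<Rightarrow> 'a \<Rightarrow> real).
           stopping_timeT M F T \<theta> \<longrightarrow>
           (\<forall>n. stopping_timeT M F T (\<theta>s n)) \<longrightarrow>
           (\<forall>n. \<forall>\<omega>\<in>space M. \<theta>s n \<omega> \<le> \<theta>s (Suc n) \<omega>) \<longrightarrow>
           (\<forall>\<omega>\<in>space M. (\<lambda>n. \<theta>s n \<omega>) \<longlonglongrightarrow> \<theta> \<omega>) \<longrightarrow>
           {\<omega>\<in>space M. \<xi> \<theta> \<omega> = \<zeta> \<theta> \<omega> \<and> (\<forall>n. \<theta>s n \<omega> < \<theta> \<omega>)} \<in> null_sets M"
proof (intro allI impI)
  fix \<theta> and \<theta>s :: "nat \<Rightarrow> 'a \<Rightarrow> real"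
  assume st: "stopping_timeT M F T \<theta>" and sts: "\<forall>n. stopping_timeT M F T (\<theta>s n)"
    and mono: "\<forall>n. \<forall>\<omega>\<in>space M. \<theta>s n \<omega> \<le> \<theta>s (Suc n) \<omega>"
    and lim: "\<forall>\<omega>\<in>space M. (\<lambda>n. \<theta>s n \<omega>) \<longlonglongrightarrow> \<theta> \<omega>"
  show "{\<omega>\<in>space M. \<xi> \<theta> \<omega> = \<zeta> \<theta> \<omega> \<and> (\<forall>n. \<theta>s n \<omega> < \<theta> \<omega>)} \<in> null_sets M"
    using main[OF space adm_xi adm_zeta pred st] sts mono lim by blast
qed

end
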